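(* Consider the "AME(3,d) quantum bit commitment" protocol described in the context, for any integer $d\ge 2$. Then: (i) (Perfect hiding) Suppose Alice chooses $b\in\{0,1\}$ uniformly at random and follows the commit phase honestly. Then, whatever state Bob prepares in Step 1 (an arbitrary, possibly dishonest, state on $\texttt{anc}\otimes\mathcal{A}\otimes\mathcal{B}$, with $\mathcal B$ possibly enlarged by an arbitrary register of Bob), Bob cannot guess $b$ before the opening phase with probability larger than $1/2$. Equivalently, the commit channels $\mathcal M_0$ and $\mathcal M_1$ defined in the context satisfy $\mathcal M_0(\rho)=\mathcal M_1(\rho)$ for every state $\rho$. (ii) ($1/d$-honest-binding) If Alice is restricted to separable operations on her register $\mathcal{A}$, then $\max\{p_s(0),p_s(1)\}\le 1/d$, where $p_s(b)$ is defined in the context.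
   Context: Let $d\ge2$, $\omega=e^{2\pi i/d}$, and let $\{|k\rangle\}_{k=0}^{d-1}$ be the computational basis of $\mathbb C^d$ (arithmetic on labels mod $d$). Define $|\tilde k\rangle=\frac{1}{\sqrt d}\sum_{l=0}^{d-1}\omega^{-kl}|l\rangle$. For a permutation $\pi\in S_d$ of $\{0,\dots,d-1\}$ set $\mathbf B_{1,\pi}=\{|\pi(k)\rangle\}_k$ and $\mathbf B_{0,\pi}=\{|\widetilde{\pi(k)}\rangle\}_k$. Registers: $\texttt{anc}\cong\mathbb C^d$; Alice's register $\mathcal A=(\mathbb C^d)^{\otimes 3}$ (three qudits); Bob's register $\mathcal B\cong\mathbb C^d$. For $l\in\{0,\dots,d-1\}$ let $|\Phi_l\rangle=\frac1{\sqrt d}\sum_{j=0}^{d-1}\omega^{jl}|jjj\rangle_{\mathcal A}|j+l\rangle_{\mathcal B}$. Protocol. Commit phase: (1) Bob prepares $|\Xi\rangle=\frac1{\sqrt d}\sum_{l=0}^{d-1}|l\rangle_{\texttt{anc}}|\Phi_l\rangle_{\mathcal A\mathcal B}$ and sends registers $\texttt{anc}$ and $\mathcal A$ to Alice. (2) Alice picks $\pi\in S_d$ uniformly at random and a bit $b$; to commit $b$ she measures $\texttt{anc}$ in basis $\mathbf B_{b,\pi}$, obtains the basis element with index $m$ (i.e. $|\pi(m)\rangle$ or $|\widetilde{\pi(m)}\rangle$), and announces $m$. In the honest case the resulting state on $\mathcal A\mathcal B$ is $|\Xi^1_{\pi,m}\rangle=|\Phi_{\pi(m)}\rangle$ if $b=1$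 and $|\Xi^0_{\pi,m}\rangle=\frac1{\sqrt d}\sum_{l=0}^{d-1}\omega^{\pi(m)l}|\Phi_l\rangle$ if $b=0$. Opening phase: (3) Alice announces a bit $b'$ and a permutation $\pi'$ and sends register $\mathcal A$ to Bob. (4) Bob projects the state of $\mathcal A\mathcal B$ onto $|\Xi^{b'}_{\pi',m}\rangle$ and accepts iff the projection succeeds. Commit channels (acting on $\texttt{anc}\otimes\mathcal A\otimes\mathcal B$, outcome recorded as $|m\rangle$ in $\texttt{anc}$): $\mathcal M_0(\rho)=\frac1{d!}\sum_{\pi\in S_d}\sum_{m}(|m\rangle\langle\widetilde{\pi(m)}|\otimes I)\rho(|\widetilde{\pi(m)}\rangle\langle m|\otimes I)$ and $\mathcal M_1(\rho)=\frac1{d!}\sum_{\pi\in S_d}\sum_m(|m\rangle\langle\pi(m)|\otimes I)\rho(|\pi(m)\rangle\langle m|\otimes I)$. Separable operations: a channel on $\mathcal A$ is separable with respect to a bipartition $\mathcal A=\mathcal A_1\otimes\mathcal A_2$ (a split of the three qudits into two nonempty groups) if it is a trace-preserving convex combination of tensor products $\mathcal N_1\otimes\mathcal N_2$ of completely positive maps on $\mathcal A_1$ and $\mathcal A_2$; "Alice is restricted to separable operations" means that any channel she applies to $\mathcal A$ is separable with respect to some such bipartition (of her choice). Honest-binding: for $b\in\{0,1\}$, $p_s(b)$ is the probability that Alice, having honestly committed to $b$ (with some $\pi$ and outcome $m$), successfully opens $1-b$, i.e. the maximum over allowed channels $\mathcal N$ on $\mathcal A$ and announced permutations $\pi'$ of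 the acceptance probability $F\big(|\Xi^{1-b}_{\pi',m}\rangle\langle\Xi^{1-b}_{\pi',m}|,(\mathcal N\otimes\mathrm{id}_{\mathcal B})(|\Xi^b_{\pi,m}\rangle\langle\Xi^b_{\pi,m}|)\big)$, where $F$ is the fidelity ($F(\rho,\sigma)=(\mathrm{Tr}\sqrt{\sqrt\sigma\rho\sqrt\sigma})^2$); the bound is required for all $\pi,m$. A protocol is $\varepsilon$-honest-binding if $\max\{p_s(0),p_s(1)\}\le\varepsilon$. *)

theory Defs
  imports Complex_Main "HOL-Combinatorics.Permutations"
begin

text \<open>Operators are represented as functions from pairs of basis labels to complex
numbers; the relevant Hilbert space is spanned by a finite carrier set S of labels.
A qudit has labels 0..<d; composite systems have tuple labels.\<close>

definition omega :: "nat \<Rightarrow> complex" where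
  "omega d = cis (2 * pi / real d)"

definition ket :: "nat \<Rightarrow> nat \<Rightarrow> complex" where
  "ket k = (\<lambda>l. if l = k then 1 else 0)"

definition fket :: "nat \<Rightarrow> nat \<Rightarrow> nat \<Rightarrow> complex" where
  "fket d k = (\<lambda>x. complex_of_real (1 / sqrt (real d)) *
                    (\<Sum>l<d. (inverse (omega d)) ^ (k * l) * ket l x))"

definition outer :: "('a \<Rightarrow> complex) \<Rightarrow> ('a \<Rightarrow> complex) \<Rightarrow> 'a \<Rightarrow> 'a \<Rightarrow> complex" where
  "outer u v = (\<lambda>i j. u i * cnj (v j))"

definition tensor_op :: "('a \<Rightarrow> 'a \<Rightarrow> complex) \<Rightarrow> ('b \<Rightarrow> 'b \<Rightarrow> complex)
    \<Rightarrow> ('a \<times> 'b) \<Rightarrow> ('a \<times> 'b) \<Rightarrow> complex" where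
  "tensor_op X Y = (\<lambda>i j. X (fst i) (fst j) * Y (snd i) (snd j))"

definition id_op :: "'a set \<Rightarrow> 'a \<Rightarrow> 'a \<Rightarrow> complex" where
  "id_op S = (\<lambda>i j. if i = j \<and> i \<in> S then 1 else 0)"

definition mmult :: "'a set \<Rightarrow> ('a \<Rightarrow> 'a \<Rightarrow> complex) \<Rightarrow> ('a \<Rightarrow> 'a \<Rightarrow> complex)
    \<Rightarrow> 'a \<Rightarrow> 'a \<Rightarrow> complex" where
  "mmult S X Y = (\<lambda>i k. \<Sum>j\<in>S. X i j * Y j k)"

definition adj :: "('a \<Rightarrow> 'a \<Rightarrow> complex) \<Rightarrow> 'a \<Rightarrow> 'a \<Rightarrow> complex" where
  "adj X = (\<lambda>i j. cnj (X j i))"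

definition tr :: "'a set \<Rightarrow> ('a \<Rightarrow> 'a \<Rightarrow> complex) \<Rightarrow> complex" where
  "tr S X = (\<Sum>i\<in>S. X i i)"

definition density :: "'a set \<Rightarrow> ('a \<Rightarrow> 'a \<Rightarrow> complex) \<Rightarrow> bool" where
  "density S \<rho> \<longleftrightarrow>
     (\<forall>i j. (i \<notin> S \<or> j \<notin> S) \<longrightarrow> \<rho> i j = 0) \<and>
     (\<forall>v. (\<Sum>i\<in>S. \<Sum>j\<in>S. cnj (v i) * \<rho> i j * v j) \<in> \<real> \<and>
          Re (\<Sum>i\<in>S. \<Sum>j\<in>S. cnj (v i) * \<rho> i j * v j) \<ge> 0) \<and>
     tr S \<rho> = 1"

definition bvec :: "nat \<Rightarrow> nat \<Rightarrow> nat \<Rightarrow> nat \<Rightarrow> complex" where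
  "bvec d b k = (if b = 0 then fket d k else ket k)"

text \<open>Commit channel M_b acting on anc (x) R, R an arbitrary finite register with
label set T (R = A (x) B (x) Bob's extra registers).\<close>
definition commit_chan :: "nat \<Rightarrow> 'r set \<Rightarrow> nat \<Rightarrow> ((nat \<times> 'r) \<Rightarrow> (nat \<times> 'r) \<Rightarrow> complex)
    \<Rightarrow> (nat \<times> 'r) \<Rightarrow> (nat \<times> 'r) \<Rightarrow> complex" where
  "commit_chan d T b \<rho> = (\<lambda>i j. (1 / of_nat (fact d)) *
     (\<Sum>\<pi>\<in>{\<pi>. \<pi> permutes {..<d}}. \<Sum>m<d.
        mmult ({..<d} \<times> T)
          (mmult ({..<d} \<times> T) (tensor_op (outer (ket m) (bvec d b (\<pi> m))) (id_op T)) \<rho>)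
          (tensor_op (outer (bvec d b (\<pi> m)) (ket m)) (id_op T)) i j))"

text \<open>Alice's register A: three qudits; Bob's register B: one qudit.\<close>
definition carA :: "nat \<Rightarrow> (nat \<times> nat \<times> nat) set" where
  "carA d = {..<d} \<times> {..<d} \<times> {..<d}"

definition carAB :: "nat \<Rightarrow> ((nat \<times> nat \<times> nat) \<times> nat) set" where
  "carAB d = carA d \<times> {..<d}"

definition ket3 :: "nat \<Rightarrow> nat \<times> nat \<times> nat \<Rightarrow> complex" where
  "ket3 j = (\<lambda>(a1, a2, a3). ket j a1 * ket j a2 * ket j a3)"

definition Phi :: "nat \<Rightarrow> nat \<Rightarrow> (nat \<times> nat \<times> nat) \<times> nat \<Rightarrow> complex" where
  "Phi d l = (\<lambda>(a, k). complex_of_real (1 / sqrt (real d)) *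
                (\<Sum>j<d. omega d ^ (j * l) * ket3 j a * ket ((j + l) mod d) k))"

definition Xi :: "nat \<Rightarrow> nat \<Rightarrow> (nat \<Rightarrow> nat) \<Rightarrow> nat \<Rightarrow> (nat \<times> nat \<times> nat) \<times> nat \<Rightarrow> complex" where
  "Xi d b \<pi> m = (if b = 1 then Phi d (\<pi> m)
     else (\<lambda>x. complex_of_real (1 / sqrt (real d)) *
               (\<Sum>l<d. omega d ^ (\<pi> m * l) * Phi d l x)))"

text \<open>Bipartitions of the three qudits of A: qudit s alone versus the other two.\<close>
definition split3 :: "nat \<Rightarrow> nat \<times> nat \<times> nat \<Rightarrow> nat \<times> (nat \<times> nat)" where
  "split3 s = (\<lambda>(a1, a2, a3). if s = 0 then (a1, (a2, a3))
                               else if s = 1 then (a2, (a1, a3)) else (a3, (a1, a2)))"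

definition prod_op :: "nat \<Rightarrow> (nat \<Rightarrow> nat \<Rightarrow> complex) \<Rightarrow> (nat \<times> nat \<Rightarrow> nat \<times> nat \<Rightarrow> complex)
    \<Rightarrow> nat \<times> nat \<times> nat \<Rightarrow> nat \<times> nat \<times> nat \<Rightarrow> complex" where
  "prod_op s K L = (\<lambda>a a'. K (fst (split3 s a)) (fst (split3 s a')) *
                           L (snd (split3 s a)) (snd (split3 s a')))"

text \<open>(N1 (x) N2)(X) for CP maps N1, N2 given by Kraus operator lists Ks, Ls.\<close>
definition prod_map :: "nat \<Rightarrow> nat \<Rightarrow> (nat \<Rightarrow> nat \<Rightarrow> complex) list
    \<Rightarrow> (nat \<times> nat \<Rightarrow> nat \<times> nat \<Rightarrow> complex) list
    \<Rightarrow> (nat \<times> nat \<times> nat \<Rightarrow> nat \<times> nat \<times> nat \<Rightarrow> complex)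
    \<Rightarrow> nat \<times> nat \<times> nat \<Rightarrow> nat \<times> nat \<times> nat \<Rightarrow> complex" where
  "prod_map d s Ks Ls X = (\<lambda>a a'. \<Sum>K\<leftarrow>Ks. \<Sum>L\<leftarrow>Ls.
      mmult (carA d) (mmult (carA d) (prod_op s K L) X) (adj (prod_op s K L)) a a')"

definition separable_channel :: "nat \<Rightarrow> ((nat \<times> nat \<times> nat \<Rightarrow> nat \<times> nat \<times> nat \<Rightarrow> complex)
    \<Rightarrow> nat \<times> nat \<times> nat \<Rightarrow> nat \<times> nat \<times> nat \<Rightarrow> complex) \<Rightarrow> bool" where
  "separable_channel d N \<longleftrightarrow>
     (\<exists>s<3. \<exists>fam :: (real \<times> (nat \<Rightarrow> nat \<Rightarrow> complex) list
                           \<times> (nat \<times> nat \<Rightarrow> nat \<times> nat \<Rightarrow> complex) list) list.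
        (\<forall>(p, Ks, Ls) \<in> set fam. p \<ge> 0) \<and>
        sum_list (map fst fam) = 1 \<and>
        (\<forall>X. N X = (\<lambda>a a'. sum_list (map (\<lambda>(p, Ks, Ls).
                        complex_of_real p * prod_map d s Ks Ls X a a') fam))) \<and>
        (\<forall>X. tr (carA d) (N X) = tr (carA d) X))"

definition chan_tensor_id :: "(('a \<Rightarrow> 'a \<Rightarrow> complex) \<Rightarrow> 'a \<Rightarrow> 'a \<Rightarrow> complex)
    \<Rightarrow> ('a \<times> 'b \<Rightarrow> 'a \<times> 'b \<Rightarrow> complex) \<Rightarrow> 'a \<times> 'b \<Rightarrow> 'a \<times> 'b \<Rightarrow> complex" where
  "chan_tensor_id N \<sigma> = (\<lambda>i j. N (\<lambda>x y. \<sigma> (x, snd i) (y, snd j)) (fst i) (fst j))"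

text \<open>Fidelity F(|psi><psi|, sigma) = <psi|sigma|psi> (first argument pure),
i.e. the success probability of projecting sigma onto psi.\<close>
definition fidelity_pure :: "'a set \<Rightarrow> ('a \<Rightarrow> complex) \<Rightarrow> ('a \<Rightarrow> 'a \<Rightarrow> complex) \<Rightarrow> real" where
  "fidelity_pure S \<psi> \<sigma> = Re (\<Sum>i\<in>S. \<Sum>j\<in>S. cnj (\<psi> i) * \<sigma> i j * \<psi> j)"

end

theory Submission
  imports Defs "HOL-Analysis.Convex"
begin


lemma sum_ket: "x < d \<Longrightarrow> (\<Sum>l<d. f l * ket l x) = f x"
  by (simp add: ket_def sum.delta if_distrib[of "\<lambda>z. _ * z"] cong: if_cong)

lemma sum_ket_ge: "\<not> x < d \<Longrightarrow> (\<Sum>l<d. f l * ket l x) = 0"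
  by (auto simp: ket_def intro!: sum.neutral)

lemma fket_eq: "x < d \<Longrightarrow> fket d k x = complex_of_real (1 / sqrt (real d)) * cis (- (2 * pi * real k * real x / real d))"
  unfolding fket_def by (subst sum_ket) (simp_all add: omega_def DeMoivre mult_ac)

lemma fket_ge: "\<not> x < d \<Longrightarrow> fket d k x = 0"
  by (simp add: fket_def sum_ket_ge)

lemma root_sum:
  assumes "x < d" "y < d"
  shows "(\<Sum>k<d. cis (2 * pi * real k * (real y - real x) / real d)) = (if x = y then of_nat d else 0)"
proof (cases "x = y")
  case True then show ?thesis by simp
next
  case False
  define z where "z = cis (2 * pi * (real y - real x) / real d)"
  have d0: "d > 0" using assms by auto
  have e: "cis (2 * pi * real k * (real y - real x) / real d) = z ^ k" for k
    by (simp add: z_def DeMoivre mult_ac)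
  have zd: "z ^ d = 1"
  proof -
    have "z ^ d = cis (2 * pi * (real y - real x))" using d0 by (simp add: z_def DeMoivre)
    also have "\<dots> = 1" by (rule cis_multiple_2pi) simp
    finally show ?thesis .
  qed
  have z1: "z \<noteq> 1"
  proof
    assume "z = 1"
    then have "cos (2 * pi * (real y - real x) / real d) = 1" by (simp add: z_def complex_eq_iff)
    then obtain n :: int where n: "2 * pi * (real y - real x) / real d = n * 2 * pi" by (auto simp: cos_one_2pi_int)
    then have "2 * pi * (real y - real x) = 2 * pi * (n * real d)" using d0 by (simp add: field_simps)
    then have "real y - real x = n * real d" by (subst (asm) mult_left_cancel) auto
    then have "int y - int x = n * int d" by (metis of_int_eq_iff of_int_mult of_int_diff of_int_of_nat_eq)
    moreover have "\<bar>int y - int x\<bar> < int d" using assms by auto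
    ultimately have lt: "\<bar>n\<bar> * int d < int d" by (simp add: abs_mult)
    have "n = 0"
    proof (rule ccontr)
      assume "n \<noteq> 0" then have "1 \<le> \<bar>n\<bar>" by simp
      then have "int d \<le> \<bar>n\<bar> * int d" using mult_right_mono[of 1 "\<bar>n\<bar>" "int d"] by simp
      then show False using lt by simp
    qed
    then show False using \<open>int y - int x = n * int d\<close> False by simp
  qed
  show ?thesis using False z1 zd by (simp add: e sum_gp_strict)
qed



lemma fket_orth:
  assumes "x < d" "y < d"
  shows "(\<Sum>k<d. cnj (fket d k y) * fket d k x) = (if x = y then 1 else 0)"
proof -
  have d0: "d > 0" using assms by auto
  have cc: "1 / sqrt (real d) * (1 / sqrt (real d)) = 1 / real d"
  proof -
    have s: "sqrt (real d) * sqrt (real d) = real d" by (simp add: real_sqrt_mult_self)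
    have "1 / sqrt (real d) * (1 / sqrt (real d)) = 1 / (sqrt (real d) * sqrt (real d))" by simp
    then show ?thesis by (simp only: s)
  qed
  have ccc: "complex_of_real (1 / sqrt (real d)) * complex_of_real (1 / sqrt (real d)) = complex_of_real (1 / real d)"
    by (metis cc of_real_mult)
  have "cnj (fket d k y) * fket d k x = complex_of_real (1 / real d) * cis (2 * pi * real k * (real y - real x) / real d)" for k
  proof -
    have fy: "cnj (fket d k y) = complex_of_real (1 / sqrt (real d)) * cis (2 * pi * real k * real y / real d)"
      unfolding fket_eq[OF assms(2)] complex_cnj_mult complex_cnj_complex_of_real cis_cnj minus_minus ..
    have fx: "fket d k x = complex_of_real (1 / sqrt (real d)) * cis (- (2 * pi * real k * real x / real d))"
      by (rule fket_eq[OF assms(1)])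
    have e1: "cnj (fket d k y) * fket d k x = (complex_of_real (1 / sqrt (real d)) * complex_of_real (1 / sqrt (real d))) * (cis (2 * pi * real k * real y / real d) * cis (- (2 * pi * real k * real x / real d)))"
      by (simp only: fx fy mult_ac)
    have r: "2 * pi * real k * real y / real d + - (2 * pi * real k * real x / real d) = 2 * pi * real k * (real y - real x) / real d"
      by (simp add: diff_divide_distrib right_diff_distrib)
    have e2: "cis (2 * pi * real k * real y / real d) * cis (- (2 * pi * real k * real x / real d)) = cis (2 * pi * real k * (real y - real x) / real d)"
      unfolding cis_mult r ..
    show ?thesis unfolding e1 ccc e2 ..
  qed
  then have "(\<Sum>k<d. cnj (fket d k y) * fket d k x) = complex_of_real (1 / real d) * (\<Sum>k<d. cis (2 * pi * real k * (real y - real x) / real d))"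
    by (simp add: sum_distrib_left)
  also have "\<dots> = (if x = y then 1 else 0)" using assms d0 by (simp add: root_sum)
  finally show ?thesis .
qed

lemma sum_prod: "(\<Sum>z\<in>A\<times>B. f z) = (\<Sum>x\<in>A. \<Sum>y\<in>B. f (x,y))"
  by (simp add: sum.cartesian_product)

lemma chan_entry:
  assumes "finite T"
  shows "mmult ({..<d}\<times>T) (mmult ({..<d}\<times>T) (tensor_op (outer (ket m) v) (id_op T)) \<rho>) (tensor_op (outer v (ket m)) (id_op T)) (a,t) (a',t')
     = ket m a * cnj (ket m a') * (if t\<in>T \<and> t'\<in>T then (\<Sum>y<d. \<Sum>x<d. cnj (v y) * \<rho> (y,t) (x,t') * v x) else 0)"
proof -
  have 1: "mmult ({..<d}\<times>T) (tensor_op (outer (ket m) v) (id_op T)) \<rho> (a,t) j = ket m a * (if t \<in> T then (\<Sum>y<d. cnj (v y) * \<rho> (y,t) j) else 0)" for j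
    unfolding mmult_def tensor_op_def outer_def id_op_def
    using assms by (simp add: sum_prod sum.delta sum.delta' if_distrib[of "\<lambda>z. _ * z"] sum.delta sum_distrib_left mult_ac cong: if_cong)
  show ?thesis
    unfolding mmult_def[of _ "mmult _ _ _"] 
    unfolding 1 unfolding tensor_op_def outer_def id_op_def
    using assms apply (simp add: sum_prod sum.delta sum.delta' if_distrib[of "\<lambda>z. _ * z"] sum_distrib_left sum_distrib_right mult_ac cong: if_cong)
    apply (intro conjI impI)
     apply (rule sum.swap)
    apply (auto intro!: sum.neutral)
    done
qed


lemma perm_shift:
  assumes "a < d" "c < d"
  shows "(\<Sum>\<pi>\<in>{\<pi>. \<pi> permutes {..<d}}. (h::nat \<Rightarrow> complex) (\<pi> a)) = (\<Sum>\<pi>\<in>{\<pi>. \<pi> permutes {..<d}}. h (\<pi> c))"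
proof -
  have p: "transpose a c permutes {..<d}" using assms by (intro permutes_swap_id) auto
  show ?thesis
    using sum_permutations_compose_right[OF p, of "\<lambda>\<pi>. h (\<pi> c)"] by simp
qed

lemma perm_avg0:
  assumes "a < d"
  shows "of_nat d * (\<Sum>\<pi>\<in>{\<pi>. \<pi> permutes {..<d}}. (h::nat \<Rightarrow> complex) (\<pi> a))
     = (\<Sum>\<pi>\<in>{\<pi>. \<pi> permutes {..<d}}. \<Sum>k<d. h k)"
proof -
  have "of_nat d * (\<Sum>\<pi>\<in>{\<pi>. \<pi> permutes {..<d}}. h (\<pi> a)) = (\<Sum>c<d. \<Sum>\<pi>\<in>{\<pi>. \<pi> permutes {..<d}}. h (\<pi> c))"
  proof -
    have "(\<Sum>c<d. \<Sum>\<pi>\<in>{\<pi>. \<pi> permutes {..<d}}. h (\<pi> c)) = (\<Sum>c<d. \<Sum>\<pi>\<in>{\<pi>. \<pi> permutes {..<d}}. h (\<pi> a))"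
      by (rule sum.cong) (simp_all add: perm_shift[OF assms, of _ h])
    then show ?thesis by simp
  qed
  also have "\<dots> = (\<Sum>\<pi>\<in>{\<pi>. \<pi> permutes {..<d}}. \<Sum>c<d. h (\<pi> c))" by (rule sum.swap)
  also have "\<dots> = (\<Sum>\<pi>\<in>{\<pi>. \<pi> permutes {..<d}}. \<Sum>k<d. h k)"
    by (rule sum.cong[OF refl]) (simp add: sum.permute[of _ "{..<d}" h] comp_def)
  finally show ?thesis .
qed

lemma perm_avg:
  assumes "a < d" "(\<Sum>k<d. f k) = (\<Sum>k<d. g k)"
  shows "(\<Sum>\<pi>\<in>{\<pi>. \<pi> permutes {..<d}}. (f::nat \<Rightarrow> complex) (\<pi> a)) = (\<Sum>\<pi>\<in>{\<pi>. \<pi> permutes {..<d}}. g (\<pi> a))"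
proof -
  have "of_nat d * (\<Sum>\<pi>\<in>{\<pi>. \<pi> permutes {..<d}}. f (\<pi> a)) = of_nat d * (\<Sum>\<pi>\<in>{\<pi>. \<pi> permutes {..<d}}. g (\<pi> a))"
    unfolding perm_avg0[OF assms(1)] assms(2) ..
  then show ?thesis using assms(1) by simp
qed

lemma sum_ket_m: "(\<Sum>m<d. ket m a * cnj (ket m a') * (H m :: complex)) = (if a = a' \<and> a < d then H a else 0)"
proof -
  have "(\<Sum>m<d. ket m a * cnj (ket m a') * H m) = (\<Sum>m<d. if m = a then (if a = a' then H m else 0) else 0)"
    by (rule sum.cong) (auto simp: ket_def)
  then show ?thesis by simp
qed

lemma sum_ket2: "k < d \<Longrightarrow> (\<Sum>x<d. f x * ket k x) = (f k :: complex)"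
proof -
  assume k: "k < d"
  have "(\<Sum>x<d. f x * ket k x) = (\<Sum>x<d. if x = k then f x else 0)" by (rule sum.cong) (auto simp: ket_def)
  then show ?thesis using k by simp
qed

lemma sum_ket3: "k < d \<Longrightarrow> (\<Sum>x<d. cnj (ket k x) * f x) = (f k :: complex)"
proof -
  assume k: "k < d"
  have "(\<Sum>x<d. cnj (ket k x) * f x) = (\<Sum>x<d. if x = k then f x else 0)" by (rule sum.cong) (auto simp: ket_def)
  then show ?thesis using k by simp
qed

lemma partI:
  fixes \<rho> :: "(nat \<times> 'r) \<Rightarrow> (nat \<times> 'r) \<Rightarrow> complex"
  assumes "finite T"
  shows "commit_chan d T 0 \<rho> = commit_chan d T 1 \<rho>"
proof (intro ext)
  fix i j :: "nat \<times> 'r"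
  obtain a t where i: "i = (a,t)" by (cases i)
  obtain a' t' where j: "j = (a',t')" by (cases j)
  define H where "H b k = (if t\<in>T \<and> t'\<in>T then (\<Sum>y<d. \<Sum>x<d. cnj (bvec d b k y) * \<rho> (y,t) (x,t') * bvec d b k x) else 0)" for b k
  have e: "commit_chan d T b \<rho> i j = (1 / of_nat (fact d)) * (\<Sum>\<pi>\<in>{\<pi>. \<pi> permutes {..<d}}. if a = a' \<and> a < d then H b (\<pi> a) else 0)" for b
    unfolding commit_chan_def i j chan_entry[OF assms] H_def[symmetric]
    by (simp add: sum_ket_m)
  have h1: "H 1 k = (if t\<in>T \<and> t'\<in>T then \<rho> (k,t) (k,t') else 0)" if k: "k < d" for k
  proof -
    have "(\<Sum>y<d. \<Sum>x<d. cnj (ket k y) * \<rho> (y,t) (x,t') * ket k x) = (\<Sum>y<d. cnj (ket k y) * (\<Sum>x<d. \<rho> (y,t) (x,t') * ket k x))"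
      by (simp only: sum_distrib_left mult.assoc)
    also have "\<dots> = (\<Sum>y<d. cnj (ket k y) * \<rho> (y,t) (k,t'))" by (simp only: sum_ket2[OF k])
    also have "\<dots> = \<rho> (k,t) (k,t')" by (rule sum_ket3[OF k])
    finally show ?thesis unfolding H_def bvec_def by simp
  qed
  have s1: "(\<Sum>k<d. H 1 k) = (if t\<in>T \<and> t'\<in>T then (\<Sum>k<d. \<rho> (k,t) (k,t')) else 0)"
  proof (cases "t\<in>T \<and> t'\<in>T")
    case True
    have "(\<Sum>k<d. H 1 k) = (\<Sum>k<d. \<rho> (k,t) (k,t'))" by (rule sum.cong) (use h1 True in auto)
    then show ?thesis using True by simp
  next
    case False
    have "(\<Sum>k<d. H 1 k) = 0" by (rule sum.neutral) (simp add: H_def False)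
    then show ?thesis using False by (simp only: if_False)
  qed
  have s0: "(\<Sum>k<d. H 0 k) = (if t\<in>T \<and> t'\<in>T then (\<Sum>k<d. \<rho> (k,t) (k,t')) else 0)"
  proof (cases "t\<in>T \<and> t'\<in>T")
    case True
    have "(\<Sum>k<d. H 0 k) = (\<Sum>k<d. \<Sum>y<d. \<Sum>x<d. \<rho> (y,t) (x,t') * (cnj (fket d k y) * fket d k x))"
      unfolding H_def bvec_def using True by (simp add: mult_ac)
    also have "\<dots> = (\<Sum>y<d. \<Sum>k<d. \<Sum>x<d. \<rho> (y,t) (x,t') * (cnj (fket d k y) * fket d k x))"
      by (rule sum.swap)
    also have "\<dots> = (\<Sum>y<d. \<Sum>x<d. \<Sum>k<d. \<rho> (y,t) (x,t') * (cnj (fket d k y) * fket d k x))"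
      by (rule sum.cong[OF refl], rule sum.swap)
    also have "\<dots> = (\<Sum>y<d. \<Sum>x<d. \<rho> (y,t) (x,t') * (\<Sum>k<d. cnj (fket d k y) * fket d k x))"
      by (simp only: sum_distrib_left)
    also have "\<dots> = (\<Sum>y<d. \<Sum>x<d. \<rho> (y,t) (x,t') * (if x = y then 1 else 0))"
      by (intro sum.cong refl) (simp add: fket_orth)
    also have "\<dots> = (\<Sum>k<d. \<rho> (k,t) (k,t'))"
      by (simp add: if_distrib[of "\<lambda>z. _ * z"] sum.delta' cong: if_cong)
    finally show ?thesis using True by simp
  next
    case False
    have "(\<Sum>k<d. H 0 k) = 0" by (rule sum.neutral) (simp add: H_def False)
    then show ?thesis using False by (simp only: if_False)
  qed
  show "commit_chan d T 0 \<rho> i j = commit_chan d T 1 \<rho> i j"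
  proof (cases "a = a' \<and> a < d")
    case True
    have pa: "(\<Sum>\<pi>\<in>{\<pi>. \<pi> permutes {..<d}}. H 0 (\<pi> a)) = (\<Sum>\<pi>\<in>{\<pi>. \<pi> permutes {..<d}}. H 1 (\<pi> a))"
      by (rule perm_avg, use True in blast, unfold s0 s1, rule refl)
    have c: "(a = a' \<and> a < d) = True" using True by simp
    show ?thesis unfolding e by (simp only: c if_True pa)
  next
    case False
    have c: "(a = a' \<and> a < d) = False" using False by simp
    show ?thesis unfolding e by (simp only: c if_False)
  qed
qed




definition dg :: "nat \<Rightarrow> nat \<times> nat \<times> nat \<Rightarrow> bool" where
  "dg d a \<longleftrightarrow> fst a < d \<and> fst a = fst (snd a) \<and> fst (snd a) = snd (snd a)"

lemma mod_inj_aux: "l0 \<le> l \<Longrightarrow> l < d \<Longrightarrow> (x + l) mod d = (x + l0) mod d \<Longrightarrow> l = (l0::nat)"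
proof -
  assume a: "l0 \<le> l" "l < d" "(x + l) mod d = (x + l0) mod d"
  then have "d dvd (x + l) - (x + l0)" using mod_eq_dvd_iff_nat[of "x + l0" "x + l" d] by simp
  then have "d dvd l - l0" by simp
  then show ?thesis using a nat_dvd_not_less[of "l - l0" d] by (cases "l - l0 = 0") auto
qed

lemma mod_inj: "l < d \<Longrightarrow> l0 < d \<Longrightarrow> (x + l) mod d = (x + l0) mod d \<Longrightarrow> l = (l0::nat)"
  by (metis mod_inj_aux nat_le_linear)

lemma mod_count: "(\<Sum>l<(d::nat). if t = (x + l) mod d then (1::real) else 0) \<le> 1"
proof (cases "\<exists>l0<d. t = (x + l0) mod d")
  case True
  then obtain l0 where l0: "l0 < d" "t = (x + l0) mod d" by auto
  have "(\<Sum>l<d. if t = (x + l) mod d then (1::real) else 0) = (\<Sum>l<d. if l = l0 then 1 else 0)"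
  proof (rule sum.cong)
    fix l assume "l \<in> {..<d}"
    then have "(t = (x + l) mod d) = (l = l0)" using l0 mod_inj[of l d l0 x] by auto
    then show "(if t = (x + l) mod d then (1::real) else 0) = (if l = l0 then 1 else 0)" by simp
  qed simp
  then show ?thesis using l0 by simp
next
  case False
  then have "(\<Sum>l<d. if t = (x + l) mod d then (1::real) else 0) = 0" by (intro sum.neutral) auto
  then show ?thesis by simp
qed

lemma Phi_exact: "Phi d l (a, t) = (if dg d a \<and> t = (fst a + l) mod d
    then complex_of_real (1 / sqrt (real d)) * omega d ^ (fst a * l) else 0)"
proof -
  obtain a1 a2 a3 where a: "a = (a1, a2, a3)" by (cases a)
  have "(\<Sum>j<d. omega d ^ (j * l) * ket3 j a * ket ((j + l) mod d) t)
      = (\<Sum>j<d. if j = a1 then (if a2 = a1 \<and> a3 = a1 \<and> t = (a1 + l) mod d then omega d ^ (a1 * l) else 0) else 0)"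
    by (rule sum.cong) (auto simp: a ket3_def ket_def)
  also have "\<dots> = (if a1 < d \<and> a2 = a1 \<and> a3 = a1 \<and> t = (a1 + l) mod d then omega d ^ (a1 * l) else 0)"
    by simp
  finally show ?thesis unfolding Phi_def by (auto simp: a dg_def)
qed

lemma norm_omega: "norm (omega d ^ n) = 1"
  by (simp add: omega_def norm_power)

lemma Phi_bound: "norm (Phi d l (a, t)) \<le> (if dg d a \<and> t = (fst a + l) mod d then 1 / sqrt (real d) else 0)"
  by (simp add: Phi_exact norm_mult norm_divide norm_omega)

lemma Xi0_bound:
  "norm (complex_of_real (1 / sqrt (real d)) * (\<Sum>l<d. omega d ^ (k * l) * Phi d l (a, t))) \<le> (if dg d a then 1 / real d else 0)"
proof -
  have nc: "norm (complex_of_real (1 / sqrt (real d))) = 1 / sqrt (real d)" by (simp only: norm_of_real) simp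
  have "norm (complex_of_real (1 / sqrt (real d)) * (\<Sum>l<d. omega d ^ (k * l) * Phi d l (a, t)))
     \<le> norm (complex_of_real (1 / sqrt (real d))) * (\<Sum>l<d. norm (omega d ^ (k * l) * Phi d l (a, t)))"
    by (subst norm_mult) (rule mult_left_mono[OF norm_sum], simp)
  also have "\<dots> = (1 / sqrt (real d)) * (\<Sum>l<d. norm (omega d ^ (k * l) * Phi d l (a, t)))" by (simp only: nc)
  also have "\<dots> \<le> (1 / sqrt (real d)) * (\<Sum>l<d. (if dg d a then 1 / sqrt (real d) else 0) * (if t = (fst a + l) mod d then 1 else 0))"
  proof (intro mult_left_mono sum_mono)
    fix l
    show "norm (omega d ^ (k * l) * Phi d l (a, t)) \<le> (if dg d a then 1 / sqrt (real d) else 0) * (if t = (fst a + l) mod d then 1 else 0)"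
      using Phi_bound[of d l a t] by (auto simp: norm_mult norm_omega split: if_splits)
  qed simp
  also have "\<dots> = (1 / sqrt (real d)) * (if dg d a then 1 / sqrt (real d) else 0) * (\<Sum>l<d. if t = (fst a + l) mod d then 1 else 0)"
    by (simp add: sum_distrib_left)
  also have "\<dots> \<le> (1 / sqrt (real d)) * (if dg d a then 1 / sqrt (real d) else 0) * 1"
    by (intro mult_left_mono mod_count) auto
  also have "\<dots> = (if dg d a then 1 / real d else 0)"
    by (simp add: real_sqrt_mult_self)
  finally show ?thesis .
qed


lemma pair_sum_bound:
  fixes U V :: "nat \<Rightarrow> complex"
  assumes U: "\<And>t. norm (U t) \<le> (if P \<and> t = f then \<alpha> else 0)" and V: "\<And>t. norm (V t) \<le> (if Q then \<beta> else 0)"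
    and "\<alpha> \<ge> 0" "\<beta> \<ge> 0"
  shows "(\<Sum>t<d. norm (U t) * norm (V t)) \<le> (if P \<and> Q then \<alpha> * \<beta> else 0)"
proof -
  have "(\<Sum>t<d. norm (U t) * norm (V t)) \<le> (\<Sum>t<d. (if P \<and> t = f then \<alpha> else 0) * (if Q then \<beta> else 0))"
    by (intro sum_mono mult_mono U V) (use assms in auto)
  also have "\<dots> = (\<Sum>t<d. if t = f then (if P \<and> Q then \<alpha> * \<beta> else 0) else 0)"
    by (rule sum.cong) auto
  also have "\<dots> \<le> (if P \<and> Q then \<alpha> * \<beta> else 0)"
    using assms by simp
  finally show ?thesis .
qed

lemma diag_set: "{a \<in> carA d. dg d a} = (\<lambda>j. (j,j,j)) ` {..<d}"
  by (auto simp: carA_def dg_def image_iff)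

lemma diag_sum: "(\<Sum>a\<in>carA d. if dg d a then g a else 0) = (\<Sum>j<d. (g (j,j,j) :: 'b::comm_monoid_add))"
proof -
  have "(\<Sum>a\<in>carA d. if dg d a then g a else 0) = sum g {a \<in> carA d. dg d a}"
    by (rule sum.inter_filter[symmetric]) (simp add: carA_def)
  also have "\<dots> = sum g ((\<lambda>j. (j,j,j)) ` {..<d})" by (simp only: diag_set)
  also have "\<dots> = (\<Sum>j<d. g (j,j,j))" by (subst sum.reindex) (auto simp: inj_on_def)
  finally show ?thesis .
qed


lemma finite_carA [simp]: "finite (carA d)" by (simp add: carA_def)
lemma finite_carAB [simp]: "finite (carAB d)" by (simp add: carAB_def)

lemma z_bound:
  fixes X Y :: "(nat \<times> nat \<times> nat) \<times> nat \<Rightarrow> complex" and M :: "nat \<times> nat \<times> nat \<Rightarrow> nat \<times> nat \<times> nat \<Rightarrow> complex"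
  assumes pb: "\<And>a b. (\<Sum>t<d. norm (Y (a,t)) * norm (X (b,t))) \<le> (if dg d a \<and> dg d b then \<kappa> else 0)" and k0: "\<kappa> \<ge> 0"
  shows "norm (\<Sum>i\<in>carAB d. cnj (Y i) * (\<Sum>b\<in>carA d. M (fst i) b * X (b, snd i)))
     \<le> \<kappa> * (\<Sum>j<d. \<Sum>j'<d. norm (M (j,j,j) (j',j',j')))"
proof -
  have "norm (\<Sum>i\<in>carAB d. cnj (Y i) * (\<Sum>b\<in>carA d. M (fst i) b * X (b, snd i)))
     \<le> (\<Sum>i\<in>carAB d. norm (cnj (Y i) * (\<Sum>b\<in>carA d. M (fst i) b * X (b, snd i))))"
    by (rule norm_sum)
  also have "\<dots> \<le> (\<Sum>i\<in>carAB d. norm (Y i) * (\<Sum>b\<in>carA d. norm (M (fst i) b) * norm (X (b, snd i))))"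
  proof (rule sum_mono)
    fix i
    have "norm (\<Sum>b\<in>carA d. M (fst i) b * X (b, snd i)) \<le> (\<Sum>b\<in>carA d. norm (M (fst i) b) * norm (X (b, snd i)))"
      by (rule order_trans[OF norm_sum]) (simp add: norm_mult)
    then show "norm (cnj (Y i) * (\<Sum>b\<in>carA d. M (fst i) b * X (b, snd i))) \<le> norm (Y i) * (\<Sum>b\<in>carA d. norm (M (fst i) b) * norm (X (b, snd i)))"
      by (simp add: norm_mult mult_left_mono)
  qed
  also have "\<dots> = (\<Sum>a\<in>carA d. \<Sum>t<d. \<Sum>b\<in>carA d. norm (M a b) * (norm (Y (a,t)) * norm (X (b, t))))"
    by (simp add: carAB_def sum_prod sum_distrib_left mult_ac)
  also have "\<dots> = (\<Sum>a\<in>carA d. \<Sum>b\<in>carA d. norm (M a b) * (\<Sum>t<d. norm (Y (a,t)) * norm (X (b, t))))"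
    by (rule sum.cong[OF refl], subst sum.swap, simp add: sum_distrib_left)
  also have "\<dots> \<le> (\<Sum>a\<in>carA d. \<Sum>b\<in>carA d. norm (M a b) * (if dg d a \<and> dg d b then \<kappa> else 0))"
    by (intro sum_mono mult_left_mono pb) simp
  also have "\<dots> = (\<Sum>a\<in>carA d. if dg d a then (\<Sum>b\<in>carA d. if dg d b then \<kappa> * norm (M a b) else 0) else 0)"
    by (rule sum.cong[OF refl]) (auto intro: sum.cong)
  also have "\<dots> = \<kappa> * (\<Sum>j<d. \<Sum>j'<d. norm (M (j,j,j) (j',j',j')))"
    by (simp add: diag_sum sum_distrib_left)
  finally show ?thesis .
qed




definition emb :: "nat \<Rightarrow> nat \<Rightarrow> nat \<Rightarrow> nat \<times> nat \<times> nat" where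
  "emb s x y = (if s = 0 then (x,y,y) else if s = 1 then (y,x,y) else (y,y,x))"

lemma split3_emb: "split3 s (emb s x y) = (x, (y, y))"
  by (simp add: split3_def emb_def)

lemma split3_diag: "split3 s (j, j, j) = (j, (j, j))"
  by (simp add: split3_def)

lemma prod_op_emb: "prod_op s K L (emb s x y) (emb s x' y') = K x x' * L (y,y) (y',y')"
  by (simp add: prod_op_def split3_emb)

lemma prod_op_diag: "prod_op s K L (j,j,j) (j',j',j') = K j j' * L (j,j) (j',j')"
  by (simp add: prod_op_def split3_diag)

lemma emb_carA: "x < d \<Longrightarrow> y < d \<Longrightarrow> emb s x y \<in> carA d"
  by (simp add: emb_def carA_def)

lemma emb_inj: "inj_on (\<lambda>(x,y). emb s x y) A"
proof (rule inj_onI)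
  fix p q :: "nat \<times> nat"
  assume h: "(case p of (x,y) \<Rightarrow> emb s x y) = (case q of (x,y) \<Rightarrow> emb s x y)"
  obtain x y where p: "p = (x,y)" by (cases p)
  obtain x' y' where q: "q = (x',y')" by (cases q)
  have "split3 s (emb s x y) = split3 s (emb s x' y')" using h p q by simp
  then show "p = q" using p q by (simp add: split3_emb)
qed

lemma mm_outer:
  "mmult S (mmult S M (\<lambda>x y. u x * cnj (v y))) (adj M) a a' = (\<Sum>b\<in>S. M a b * u b) * cnj (\<Sum>c\<in>S. M a' c * v c)"
proof -
  have "mmult S (mmult S M (\<lambda>x y. u x * cnj (v y))) (adj M) a a' = (\<Sum>c\<in>S. \<Sum>b\<in>S. M a b * u b * (cnj (M a' c) * cnj (v c)))"
    unfolding mmult_def adj_def by (rule sum.cong[OF refl]) (simp add: sum_distrib_right sum_distrib_left mult_ac)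
  also have "\<dots> = (\<Sum>b\<in>S. \<Sum>c\<in>S. M a b * u b * (cnj (M a' c) * cnj (v c)))" by (rule sum.swap)
  also have "\<dots> = (\<Sum>b\<in>S. M a b * u b) * cnj (\<Sum>c\<in>S. M a' c * v c)"
    by (simp add: sum_product)
  finally show ?thesis .
qed

lemma CS2:
  fixes f g :: "nat \<Rightarrow> nat \<Rightarrow> real"
  shows "(\<Sum>j<d. \<Sum>j'<d. f j j' * g j j')\<^sup>2 \<le> (\<Sum>j<d. \<Sum>j'<d. (f j j')\<^sup>2) * (\<Sum>j<d. \<Sum>j'<d. (g j j')\<^sup>2)"
  using Cauchy_Schwarz_ineq_sum[of "\<lambda>(j,j'). f j j'" "\<lambda>(j,j'). g j j'" "{..<d} \<times> {..<d}"]
  by (simp add: sum_prod)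




lemma quad:
  fixes Y :: "'i \<Rightarrow> complex" and w :: "'g \<Rightarrow> 'i \<Rightarrow> complex" and C :: "'g \<Rightarrow> complex"
  shows "(\<Sum>i\<in>S. \<Sum>j\<in>S. cnj (Y i) * (\<Sum>g\<in>G. C g * (w g i * cnj (w g j))) * Y j)
       = (\<Sum>g\<in>G. C g * ((\<Sum>i\<in>S. cnj (Y i) * w g i) * cnj (\<Sum>i\<in>S. cnj (Y i) * w g i)))"
proof -
  have "(\<Sum>i\<in>S. \<Sum>j\<in>S. cnj (Y i) * (\<Sum>g\<in>G. C g * (w g i * cnj (w g j))) * Y j)
      = (\<Sum>i\<in>S. \<Sum>j\<in>S. \<Sum>g\<in>G. C g * (cnj (Y i) * w g i * (Y j * cnj (w g j))))"
    by (intro sum.cong refl) (simp add: sum_distrib_left sum_distrib_right mult_ac)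
  also have "\<dots> = (\<Sum>i\<in>S. \<Sum>g\<in>G. \<Sum>j\<in>S. C g * (cnj (Y i) * w g i * (Y j * cnj (w g j))))"
    by (rule sum.cong[OF refl], rule sum.swap)
  also have "\<dots> = (\<Sum>g\<in>G. \<Sum>i\<in>S. \<Sum>j\<in>S. C g * (cnj (Y i) * w g i * (Y j * cnj (w g j))))"
    by (rule sum.swap)
  also have "\<dots> = (\<Sum>g\<in>G. C g * ((\<Sum>i\<in>S. cnj (Y i) * w g i) * cnj (\<Sum>i\<in>S. cnj (Y i) * w g i)))"
    by (rule sum.cong[OF refl]) (simp add: sum_product sum_distrib_left mult_ac)
  finally show ?thesis .
qed

context
  fixes d :: nat and s :: nat and N and G :: "'g set" and c :: "'g \<Rightarrow> real"
    and Kf :: "'g \<Rightarrow> nat \<Rightarrow> nat \<Rightarrow> complex" and Lf :: "'g \<Rightarrow> nat \<times> nat \<Rightarrow> nat \<times> nat \<Rightarrow> complex"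
  assumes NG: "\<And>Z. N Z = (\<lambda>a a'. \<Sum>g\<in>G. complex_of_real (c g) *
      mmult (carA d) (mmult (carA d) (prod_op s (Kf g) (Lf g)) Z) (adj (prod_op s (Kf g) (Lf g))) a a')"
    and finG: "finite G" and cpos: "\<And>g. g \<in> G \<Longrightarrow> c g \<ge> 0"
    and TP: "\<And>Z. tr (carA d) (N Z) = tr (carA d) Z"
begin

lemma TP1:
  assumes a0: "a0 \<in> carA d"
  shows "(\<Sum>g\<in>G. c g * (\<Sum>a\<in>carA d. (norm (prod_op s (Kf g) (Lf g) a a0))\<^sup>2)) = 1"
proof -
  define u where "u x = (if x = a0 then 1 else 0 :: complex)" for x
  define Z0 where "Z0 = (\<lambda>x y. u x * cnj (u y))"
  have su: "(\<Sum>b\<in>carA d. M a b * u b) = M a a0" for M :: "nat \<times> nat \<times> nat \<Rightarrow> nat \<times> nat \<times> nat \<Rightarrow> complex" and a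
  proof -
    have "(\<Sum>b\<in>carA d. M a b * u b) = (\<Sum>b\<in>carA d. if b = a0 then M a b else 0)"
      by (rule sum.cong) (auto simp: u_def)
    then show ?thesis using a0 by simp
  qed
  have "tr (carA d) Z0 = (\<Sum>b\<in>carA d. if b = a0 then 1 else 0)"
    unfolding tr_def Z0_def by (rule sum.cong) (auto simp: u_def)
  then have t0: "tr (carA d) Z0 = 1" using a0 by simp
  have "tr (carA d) (N Z0) = (\<Sum>a\<in>carA d. \<Sum>g\<in>G. complex_of_real (c g) *
      (prod_op s (Kf g) (Lf g) a a0 * cnj (prod_op s (Kf g) (Lf g) a a0)))"
    unfolding tr_def NG Z0_def mm_outer su ..
  also have "\<dots> = (\<Sum>a\<in>carA d. \<Sum>g\<in>G. complex_of_real (c g * (norm (prod_op s (Kf g) (Lf g) a a0))\<^sup>2))"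
    by (simp only: complex_norm_square[symmetric] of_real_mult)
  also have "\<dots> = complex_of_real (\<Sum>g\<in>G. c g * (\<Sum>a\<in>carA d. (norm (prod_op s (Kf g) (Lf g) a a0))\<^sup>2))"
    by (simp add: sum_distrib_left sum.swap[of _ "carA d"])
  finally have e: "tr (carA d) (N Z0) = complex_of_real (\<Sum>g\<in>G. c g * (\<Sum>a\<in>carA d. (norm (prod_op s (Kf g) (Lf g) a a0))\<^sup>2))" .
  have "complex_of_real (\<Sum>g\<in>G. c g * (\<Sum>a\<in>carA d. (norm (prod_op s (Kf g) (Lf g) a a0))\<^sup>2)) = 1"
    using e TP[of Z0] t0 by metis
  then show ?thesis by (simp only: of_real_eq_1_iff)
qed


lemma emb_sum_le:
  fixes h :: "nat \<times> nat \<times> nat \<Rightarrow> real"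
  assumes "\<And>a. h a \<ge> 0"
  shows "(\<Sum>x<d. \<Sum>y<d. h (emb s x y)) \<le> (\<Sum>a\<in>carA d. h a)"
proof -
  have "(\<Sum>x<d. \<Sum>y<d. h (emb s x y)) = (\<Sum>p\<in>{..<d}\<times>{..<d}. h ((\<lambda>(x,y). emb s x y) p))"
    by (simp add: sum_prod)
  also have "\<dots> = (\<Sum>a\<in>(\<lambda>(x,y). emb s x y) ` ({..<d}\<times>{..<d}). h a)"
    by (rule sum.reindex[symmetric, unfolded comp_def]) (rule emb_inj)
  also have "\<dots> \<le> (\<Sum>a\<in>carA d. h a)"
    by (rule sum_mono2) (auto simp: emb_carA assms)
  finally show ?thesis .
qed

lemma TP2:
  assumes j: "j1 < d" "j2 < d"
  shows "(\<Sum>g\<in>G. c g * ((\<Sum>x<d. (norm (Kf g x j1))\<^sup>2) * (\<Sum>y<d. (norm (Lf g (y,y) (j2,j2)))\<^sup>2))) \<le> 1"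
proof -
  have "(\<Sum>g\<in>G. c g * ((\<Sum>x<d. (norm (Kf g x j1))\<^sup>2) * (\<Sum>y<d. (norm (Lf g (y,y) (j2,j2)))\<^sup>2)))
     \<le> (\<Sum>g\<in>G. c g * (\<Sum>a\<in>carA d. (norm (prod_op s (Kf g) (Lf g) a (emb s j1 j2)))\<^sup>2))"
  proof (rule sum_mono, rule mult_left_mono)
    fix g assume "g \<in> G"
    then show "0 \<le> c g" by (rule cpos)
    have "(\<Sum>x<d. (norm (Kf g x j1))\<^sup>2) * (\<Sum>y<d. (norm (Lf g (y,y) (j2,j2)))\<^sup>2)
        = (\<Sum>x<d. \<Sum>y<d. (norm (prod_op s (Kf g) (Lf g) (emb s x y) (emb s j1 j2)))\<^sup>2)"
      by (simp add: sum_product prod_op_emb norm_mult power_mult_distrib)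
    also have "\<dots> \<le> (\<Sum>a\<in>carA d. (norm (prod_op s (Kf g) (Lf g) a (emb s j1 j2)))\<^sup>2)"
      by (rule emb_sum_le) simp
    finally show "(\<Sum>x<d. (norm (Kf g x j1))\<^sup>2) * (\<Sum>y<d. (norm (Lf g (y,y) (j2,j2)))\<^sup>2)
        \<le> (\<Sum>a\<in>carA d. (norm (prod_op s (Kf g) (Lf g) a (emb s j1 j2)))\<^sup>2)" .
  qed
  also have "\<dots> = 1" by (rule TP1) (rule emb_carA[OF j])
  finally show ?thesis .
qed

lemma TP3:
  "(\<Sum>g\<in>G. c g * ((\<Sum>x<d. \<Sum>j<d. (norm (Kf g x j))\<^sup>2) * (\<Sum>y<d. \<Sum>j<d. (norm (Lf g (y,y) (j,j)))\<^sup>2))) \<le> real d * real d"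
proof -
  have "(\<Sum>g\<in>G. c g * ((\<Sum>x<d. \<Sum>j<d. (norm (Kf g x j))\<^sup>2) * (\<Sum>y<d. \<Sum>j<d. (norm (Lf g (y,y) (j,j)))\<^sup>2)))
    = (\<Sum>g\<in>G. c g * ((\<Sum>j1<d. \<Sum>x<d. (norm (Kf g x j1))\<^sup>2) * (\<Sum>j2<d. \<Sum>y<d. (norm (Lf g (y,y) (j2,j2)))\<^sup>2)))"
  proof -
    have s1: "(\<Sum>x<d. \<Sum>j<d. (norm (Kf g x j))\<^sup>2) = (\<Sum>j1<d. \<Sum>x<d. (norm (Kf g x j1))\<^sup>2)" for g
      by (rule sum.swap)
    have s2: "(\<Sum>y<d. \<Sum>j<d. (norm (Lf g (y,y) (j,j)))\<^sup>2) = (\<Sum>j2<d. \<Sum>y<d. (norm (Lf g (y,y) (j2,j2)))\<^sup>2)" for g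
      by (rule sum.swap)
    show ?thesis by (simp only: s1 s2)
  qed
  also have "\<dots> = (\<Sum>j1<d. \<Sum>j2<d. \<Sum>g\<in>G. c g * ((\<Sum>x<d. (norm (Kf g x j1))\<^sup>2) * (\<Sum>y<d. (norm (Lf g (y,y) (j2,j2)))\<^sup>2)))"
  proof -
    have "(\<Sum>g\<in>G. c g * ((\<Sum>j1<d. \<Sum>x<d. (norm (Kf g x j1))\<^sup>2) * (\<Sum>j2<d. \<Sum>y<d. (norm (Lf g (y,y) (j2,j2)))\<^sup>2)))
      = (\<Sum>g\<in>G. \<Sum>j1<d. \<Sum>j2<d. c g * ((\<Sum>x<d. (norm (Kf g x j1))\<^sup>2) * (\<Sum>y<d. (norm (Lf g (y,y) (j2,j2)))\<^sup>2)))"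
    proof (rule sum.cong[OF refl])
      fix g
      have "(\<Sum>j1<d. \<Sum>x<d. (norm (Kf g x j1))\<^sup>2) * (\<Sum>j2<d. \<Sum>y<d. (norm (Lf g (y,y) (j2,j2)))\<^sup>2)
        = (\<Sum>j1<d. \<Sum>j2<d. (\<Sum>x<d. (norm (Kf g x j1))\<^sup>2) * (\<Sum>y<d. (norm (Lf g (y,y) (j2,j2)))\<^sup>2))"
        by (rule sum_product)
      then show "c g * ((\<Sum>j1<d. \<Sum>x<d. (norm (Kf g x j1))\<^sup>2) * (\<Sum>j2<d. \<Sum>y<d. (norm (Lf g (y,y) (j2,j2)))\<^sup>2))
        = (\<Sum>j1<d. \<Sum>j2<d. c g * ((\<Sum>x<d. (norm (Kf g x j1))\<^sup>2) * (\<Sum>y<d. (norm (Lf g (y,y) (j2,j2)))\<^sup>2)))"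
        by (simp only: sum_distrib_left)
    qed
    also have "\<dots> = (\<Sum>j1<d. \<Sum>g\<in>G. \<Sum>j2<d. c g * ((\<Sum>x<d. (norm (Kf g x j1))\<^sup>2) * (\<Sum>y<d. (norm (Lf g (y,y) (j2,j2)))\<^sup>2)))"
      by (rule sum.swap)
    also have "\<dots> = (\<Sum>j1<d. \<Sum>j2<d. \<Sum>g\<in>G. c g * ((\<Sum>x<d. (norm (Kf g x j1))\<^sup>2) * (\<Sum>y<d. (norm (Lf g (y,y) (j2,j2)))\<^sup>2)))"
      by (rule sum.cong[OF refl], rule sum.swap)
    finally show ?thesis .
  qed
  also have "\<dots> \<le> (\<Sum>j1<d. \<Sum>j2<d. (1::real))"
    by (intro sum_mono TP2) auto
  also have "\<dots> = real d * real d" by simp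
  finally show ?thesis .
qed


lemma fid_formula:
  fixes X Y :: "(nat \<times> nat \<times> nat) \<times> nat \<Rightarrow> complex"
  shows "fidelity_pure (carAB d) Y (chan_tensor_id N (outer X X))
     = (\<Sum>g\<in>G. c g * (norm (\<Sum>i\<in>carAB d. cnj (Y i) * (\<Sum>b\<in>carA d. prod_op s (Kf g) (Lf g) (fst i) b * X (b, snd i))))\<^sup>2)"
proof -
  define w where "w g i = (\<Sum>b\<in>carA d. prod_op s (Kf g) (Lf g) (fst i) b * X (b, snd i))" for g i
  have ct: "chan_tensor_id N (outer X X) i j = (\<Sum>g\<in>G. complex_of_real (c g) * (w g i * cnj (w g j)))" for i j
    unfolding chan_tensor_id_def NG outer_def w_def by (simp only: mm_outer)
  have "fidelity_pure (carAB d) Y (chan_tensor_id N (outer X X))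
      = Re (\<Sum>i\<in>carAB d. \<Sum>j\<in>carAB d. cnj (Y i) * (\<Sum>g\<in>G. complex_of_real (c g) * (w g i * cnj (w g j))) * Y j)"
    unfolding fidelity_pure_def ct ..
  also have "\<dots> = Re (\<Sum>g\<in>G. complex_of_real (c g) * ((\<Sum>i\<in>carAB d. cnj (Y i) * w g i) * cnj (\<Sum>i\<in>carAB d. cnj (Y i) * w g i)))"
    by (simp only: quad)
  also have "\<dots> = Re (\<Sum>g\<in>G. complex_of_real (c g * (norm (\<Sum>i\<in>carAB d. cnj (Y i) * w g i))\<^sup>2))"
    by (simp only: complex_norm_square[symmetric] of_real_mult)
  also have "\<dots> = (\<Sum>g\<in>G. c g * (norm (\<Sum>i\<in>carAB d. cnj (Y i) * w g i))\<^sup>2)"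
    by (simp only: of_real_sum[symmetric] Re_complex_of_real)
  finally show ?thesis unfolding w_def .
qed

lemma main_bound:
  fixes X Y :: "(nat \<times> nat \<times> nat) \<times> nat \<Rightarrow> complex"
  assumes pb: "\<And>a b. (\<Sum>t<d. norm (Y (a,t)) * norm (X (b,t))) \<le> (if dg d a \<and> dg d b then 1 / (real d * sqrt (real d)) else 0)"
    and d0: "d > 0"
  shows "fidelity_pure (carAB d) Y (chan_tensor_id N (outer X X)) \<le> 1 / real d"
proof -
  define \<kappa> where "\<kappa> = 1 / (real d * sqrt (real d))"
  have k0: "\<kappa> \<ge> 0" by (simp add: \<kappa>_def)
  have kk: "\<kappa>\<^sup>2 * (real d * real d) = 1 / real d"
    using d0 by (simp add: \<kappa>_def power2_eq_square field_simps)
  define AK where "AK g = (\<Sum>x<d. \<Sum>j<d. (norm (Kf g x j))\<^sup>2)" for g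
  define BL where "BL g = (\<Sum>y<d. \<Sum>j<d. (norm (Lf g (y,y) (j,j)))\<^sup>2)" for g
  have zb: "(norm (\<Sum>i\<in>carAB d. cnj (Y i) * (\<Sum>b\<in>carA d. prod_op s (Kf g) (Lf g) (fst i) b * X (b, snd i))))\<^sup>2
      \<le> \<kappa>\<^sup>2 * (AK g * BL g)" for g
  proof -
    have "norm (\<Sum>i\<in>carAB d. cnj (Y i) * (\<Sum>b\<in>carA d. prod_op s (Kf g) (Lf g) (fst i) b * X (b, snd i)))
       \<le> \<kappa> * (\<Sum>j<d. \<Sum>j'<d. norm (prod_op s (Kf g) (Lf g) (j,j,j) (j',j',j')))"
      by (rule z_bound[OF _ k0]) (unfold \<kappa>_def, rule pb)
    also have "\<dots> = \<kappa> * (\<Sum>j<d. \<Sum>j'<d. norm (Kf g j j') * norm (Lf g (j,j) (j',j')))"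
      by (simp add: prod_op_diag norm_mult)
    finally have n1: "norm (\<Sum>i\<in>carAB d. cnj (Y i) * (\<Sum>b\<in>carA d. prod_op s (Kf g) (Lf g) (fst i) b * X (b, snd i)))
       \<le> \<kappa> * (\<Sum>j<d. \<Sum>j'<d. norm (Kf g j j') * norm (Lf g (j,j) (j',j')))" .
    have "(norm (\<Sum>i\<in>carAB d. cnj (Y i) * (\<Sum>b\<in>carA d. prod_op s (Kf g) (Lf g) (fst i) b * X (b, snd i))))\<^sup>2
       \<le> (\<kappa> * (\<Sum>j<d. \<Sum>j'<d. norm (Kf g j j') * norm (Lf g (j,j) (j',j'))))\<^sup>2"
      by (rule power_mono[OF n1]) simp
    also have "\<dots> = \<kappa>\<^sup>2 * (\<Sum>j<d. \<Sum>j'<d. norm (Kf g j j') * norm (Lf g (j,j) (j',j')))\<^sup>2"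
      by (simp add: power_mult_distrib)
    also have "\<dots> \<le> \<kappa>\<^sup>2 * (AK g * BL g)"
      unfolding AK_def BL_def by (rule mult_left_mono[OF CS2]) simp
    finally show ?thesis .
  qed
  have "fidelity_pure (carAB d) Y (chan_tensor_id N (outer X X))
     = (\<Sum>g\<in>G. c g * (norm (\<Sum>i\<in>carAB d. cnj (Y i) * (\<Sum>b\<in>carA d. prod_op s (Kf g) (Lf g) (fst i) b * X (b, snd i))))\<^sup>2)"
    by (rule fid_formula)
  also have "\<dots> \<le> (\<Sum>g\<in>G. c g * (\<kappa>\<^sup>2 * (AK g * BL g)))"
    by (intro sum_mono mult_left_mono zb cpos)
  also have "\<dots> = \<kappa>\<^sup>2 * (\<Sum>g\<in>G. c g * (AK g * BL g))"
    by (simp add: sum_distrib_left mult_ac)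
  also have "\<dots> \<le> \<kappa>\<^sup>2 * (real d * real d)"
    unfolding AK_def BL_def by (rule mult_left_mono[OF TP3]) simp
  also have "\<dots> = 1 / real d" by (rule kk)
  finally show ?thesis .
qed

end




lemma Xi0_eq: "Xi d 0 \<pi> m x = complex_of_real (1 / sqrt (real d)) * (\<Sum>l<d. omega d ^ (\<pi> m * l) * Phi d l x)"
  by (simp add: Xi_def)

lemma Xi1_eq: "Xi d 1 \<pi> m = Phi d (\<pi> m)"
  by (simp add: Xi_def)

lemma kappa_eq: "1 / sqrt (real d) * (1 / real d) = 1 / (real d * sqrt (real d))"
  by simp

lemma pb1: "(\<Sum>t<d. norm (Xi d 0 \<pi>' m (a,t)) * norm (Xi d 1 \<pi> m (b,t))) \<le> (if dg d a \<and> dg d b then 1 / (real d * sqrt (real d)) else 0)"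
proof -
  have "(\<Sum>t<d. norm (Xi d 0 \<pi>' m (a,t)) * norm (Xi d 1 \<pi> m (b,t))) = (\<Sum>t<d. norm (Phi d (\<pi> m) (b,t)) * norm (Xi d 0 \<pi>' m (a,t)))"
    unfolding Xi1_eq by (simp add: mult.commute)
  also have "\<dots> \<le> (if dg d b \<and> dg d a then 1 / sqrt (real d) * (1 / real d) else 0)"
  proof (rule pair_sum_bound)
    fix t
    show "norm (Phi d (\<pi> m) (b,t)) \<le> (if dg d b \<and> t = (fst b + \<pi> m) mod d then 1 / sqrt (real d) else 0)"
      by (rule Phi_bound)
    show "norm (Xi d 0 \<pi>' m (a,t)) \<le> (if dg d a then 1 / real d else 0)"
      unfolding Xi0_eq by (rule Xi0_bound)
  qed simp_all
  also have "\<dots> = (if dg d a \<and> dg d b then 1 / (real d * sqrt (real d)) else 0)"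
    by (auto simp: kappa_eq)
  finally show ?thesis .
qed

lemma pb0: "(\<Sum>t<d. norm (Xi d 1 \<pi>' m (a,t)) * norm (Xi d 0 \<pi> m (b,t))) \<le> (if dg d a \<and> dg d b then 1 / (real d * sqrt (real d)) else 0)"
proof -
  have "(\<Sum>t<d. norm (Xi d 1 \<pi>' m (a,t)) * norm (Xi d 0 \<pi> m (b,t))) = (\<Sum>t<d. norm (Phi d (\<pi>' m) (a,t)) * norm (Xi d 0 \<pi> m (b,t)))"
    unfolding Xi1_eq ..
  also have "\<dots> \<le> (if dg d a \<and> dg d b then 1 / sqrt (real d) * (1 / real d) else 0)"
  proof (rule pair_sum_bound)
    fix t
    show "norm (Phi d (\<pi>' m) (a,t)) \<le> (if dg d a \<and> t = (fst a + \<pi>' m) mod d then 1 / sqrt (real d) else 0)"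
      by (rule Phi_bound)
    show "norm (Xi d 0 \<pi> m (b,t)) \<le> (if dg d b then 1 / real d else 0)"
      unfolding Xi0_eq by (rule Xi0_bound)
  qed simp_all
  also have "\<dots> = (if dg d a \<and> dg d b then 1 / (real d * sqrt (real d)) else 0)"
    by (simp only: kappa_eq)
  finally show ?thesis .
qed

lemma sl: "sum_list (map f xs) = (\<Sum>i<length xs. f (xs ! i))"
  by (simp add: sum_list_sum_nth atLeast0LessThan)

lemma sep_repr:
  assumes "separable_channel d N"
  obtains s G c Kf Lf where
    "\<And>Z. N Z = (\<lambda>a a'. \<Sum>g\<in>G. complex_of_real (c g) *
      mmult (carA d) (mmult (carA d) (prod_op s (Kf g) (Lf g)) Z) (adj (prod_op s (Kf g) (Lf g))) a a')"
    "finite (G :: (nat \<times> nat \<times> nat) set)" "\<And>g. g \<in> G \<Longrightarrow> c g \<ge> 0"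
    "\<And>Z. tr (carA d) (N Z) = tr (carA d) Z"
proof -
  from assms obtain s fam where
    pos: "\<forall>(p, Ks, Ls) \<in> set fam. p \<ge> 0" and
    NX: "\<forall>X. N X = (\<lambda>a a'. sum_list (map (\<lambda>(p, Ks, Ls). complex_of_real p * prod_map d s Ks Ls X a a') fam))" and
    tp: "\<forall>X. tr (carA d) (N X) = tr (carA d) X"
    unfolding separable_channel_def by blast
  define G where "G = (SIGMA f:{..<length fam}. SIGMA u:{..<length (fst (snd (fam ! f)))}. {..<length (snd (snd (fam ! f)))})"
  define c where "c g = fst (fam ! fst g)" for g :: "nat \<times> nat \<times> nat"
  define Kf where "Kf g = fst (snd (fam ! fst g)) ! fst (snd g)" for g :: "nat \<times> nat \<times> nat"
  define Lf where "Lf g = snd (snd (fam ! fst g)) ! snd (snd g)" for g :: "nat \<times> nat \<times> nat"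
  have fG: "finite G" unfolding G_def by (intro finite_SigmaI) auto
  have cp: "c g \<ge> 0" if "g \<in> G" for g
  proof -
    from that have "fst g < length fam" by (auto simp: G_def)
    then have "fam ! fst g \<in> set fam" by simp
    moreover obtain p Ks Ls where e: "fam ! fst g = (p, Ks, Ls)" by (cases "fam ! fst g") auto
    ultimately have "(p, Ks, Ls) \<in> set fam" by metis
    then have "p \<ge> 0" using pos by blast
    then show ?thesis by (simp add: c_def e)
  qed
  have NZ: "N Z = (\<lambda>a a'. \<Sum>g\<in>G. complex_of_real (c g) *
      mmult (carA d) (mmult (carA d) (prod_op s (Kf g) (Lf g)) Z) (adj (prod_op s (Kf g) (Lf g))) a a')" for Z
  proof (intro ext)
    fix a a'
    define F where "F f u v = mmult (carA d) (mmult (carA d) (prod_op s (fst (snd (fam ! f)) ! u) (snd (snd (fam ! f)) ! v)) Z)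
        (adj (prod_op s (fst (snd (fam ! f)) ! u) (snd (snd (fam ! f)) ! v))) a a'" for f u v
    have "N Z a a' = (\<Sum>f<length fam. complex_of_real (fst (fam ! f)) *
        (\<Sum>u<length (fst (snd (fam ! f))). \<Sum>v<length (snd (snd (fam ! f))). F f u v))"
      unfolding NX[rule_format] sl prod_map_def F_def
      by (rule sum.cong[OF refl]) (simp add: split_def)
    also have "\<dots> = (\<Sum>f<length fam. \<Sum>u<length (fst (snd (fam ! f))). \<Sum>v<length (snd (snd (fam ! f))).
        complex_of_real (fst (fam ! f)) * F f u v)"
      by (simp add: sum_distrib_left)
    also have "\<dots> = (\<Sum>g\<in>G. complex_of_real (c g) * F (fst g) (fst (snd g)) (snd (snd g)))"
      unfolding G_def c_def by (simp add: sum.Sigma split_def)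
    finally show "N Z a a' = (\<Sum>g\<in>G. complex_of_real (c g) *
      mmult (carA d) (mmult (carA d) (prod_op s (Kf g) (Lf g)) Z) (adj (prod_op s (Kf g) (Lf g))) a a')"
      by (simp add: F_def Kf_def Lf_def)
  qed
  show ?thesis
    apply (rule that)
       apply (rule NZ)
      apply (rule fG)
     apply (erule cp)
    apply (rule tp[rule_format])
    done
qed


theorem theorem1:
  fixes d :: nat
  assumes "d \<ge> 2"
  shows "(\<forall>(T :: 'r set) \<rho>. finite T \<and> T \<noteq> {} \<and> density ({..<d} \<times> T) \<rho> \<longrightarrow>
            commit_chan d T 0 \<rho> = commit_chan d T 1 \<rho>) \<and>
         (\<forall>b \<pi> m \<pi>' N. b \<le> 1 \<and> \<pi> permutes {..<d} \<and> m < d \<and> \<pi>' permutes {..<d} \<and>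
            separable_channel d N \<longrightarrow>
            fidelity_pure (carAB d) (Xi d (1 - b) \<pi>' m)
               (chan_tensor_id N (outer (Xi d b \<pi> m) (Xi d b \<pi> m))) \<le> 1 / real d)"
proof (intro conjI allI impI)
  fix T :: "'r set" and \<rho>
  assume "finite T \<and> T \<noteq> {} \<and> density ({..<d} \<times> T) \<rho>"
  then show "commit_chan d T 0 \<rho> = commit_chan d T 1 \<rho>" using partI by blast
next
  fix b m :: nat and \<pi> \<pi>' :: "nat \<Rightarrow> nat" and N
  assume h: "b \<le> 1 \<and> \<pi> permutes {..<d} \<and> m < d \<and> \<pi>' permutes {..<d} \<and> separable_channel d N"
  have d0: "d > 0" using assms by simp
  from h have sep: "separable_channel d N" by blast
  obtain c s Kf Lf G where NG: "\<And>Z. N Z = (\<lambda>a a'. \<Sum>g\<in>G. complex_of_real (c g) *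
      mmult (carA d) (mmult (carA d) (prod_op s (Kf g) (Lf g)) Z) (adj (prod_op s (Kf g) (Lf g))) a a')"
    and fG: "finite (G :: (nat \<times> nat \<times> nat) set)" and cp: "\<And>g. g \<in> G \<Longrightarrow> c g \<ge> 0"
    and tp: "\<And>Z. tr (carA d) (N Z) = tr (carA d) Z"
    by (rule sep_repr[OF sep]) blast
  have "b = 0 \<or> b = 1" using h by auto
  then show "fidelity_pure (carAB d) (Xi d (1 - b) \<pi>' m)
               (chan_tensor_id N (outer (Xi d b \<pi> m) (Xi d b \<pi> m))) \<le> 1 / real d"
  proof
    assume b0: "b = 0"
    have e: "(1::nat) - 0 = 1" by simp
    show ?thesis unfolding b0 e
      apply (rule main_bound[where X="Xi d 0 \<pi> m" and Y="Xi d 1 \<pi>' m"])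
           apply (rule NG)
          apply (rule fG)
         apply (erule cp)
        apply (rule tp)
       apply (rule pb0)
      apply (rule d0)
      done
  next
    assume b1: "b = 1"
    have e: "(1::nat) - 1 = 0" by simp
    show ?thesis unfolding b1 e
      apply (rule main_bound[where X="Xi d 1 \<pi> m" and Y="Xi d 0 \<pi>' m"])
           apply (rule NG)
          apply (rule fG)
         apply (erule cp)
        apply (rule tp)
       apply (rule pb1)
      apply (rule d0)
      done
  qed
qed

end
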